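(* Let $p,q,r\in(0,1/36)$, $h=8/15$, $a=3/15$, and let $\mathcal S_{pqr}=\{S_1,\dots,S_6\}$ be given by $S_1(x)=px$, $S_2(x)=a+rx$, $S_3(x)=h-qx$, $S_4(x)=h-r+rx$, $S_5(x)=1-a-rx$, $S_6(x)=1-r+rx$. If $\frac{\log p}{\log r}\notin\mathbb{Q}$, then $\mathcal S_{pqr}$ does not have the weak separation property, for every such $q$.
   Context: For a system $\mathcal S=\{S_1,\dots,S_m\}$ of similarities, let $F=\{S_{j_1}\circ\cdots\circ S_{j_n}: n\ge1, j_k\in\{1,\dots,m\}\}$ be the generated semigroup and $\mathcal F=\{g^{-1}\circ f: f,g\in F\}$ the associated family of similarities. $\mathcal S$ has the weak separation property (WSP) if $\mathrm{Id}$ is not a limit point of $\mathcal F\setminus\{\mathrm{Id}\}$, i.e. $\mathrm{Id}\notin\overline{\mathcal F\setminus\{\mathrm{Id}\}}$ (for similarities $x\mapsto \lambda x+b$ of $\mathbb{R}$, convergence means convergence of the coefficients $\lambda,b$). *)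

theory Defs
  imports "HOL-Analysis.Analysis"
begin

text \<open>A similarity x \<mapsto> l*x + b of the real line is represented by its coefficient
  pair (l, b) :: real \<times> real (with l \<noteq> 0).  Convergence of similarities is
  convergence of the coefficients, i.e. the product topology on real \<times> real.\<close>

type_synonym sim = "real \<times> real"

definition sim_app :: "sim \<Rightarrow> real \<Rightarrow> real" where
  "sim_app s x = fst s * x + snd s"

definition sim_comp :: "sim \<Rightarrow> sim \<Rightarrow> sim" where
  "sim_comp f g = (fst f * fst g, fst f * snd g + snd f)"

definition sim_inv :: "sim \<Rightarrow> sim" where
  "sim_inv f = (1 / fst f, - snd f / fst f)"

definition sim_id :: sim where
  "sim_id = (1, 0)"

inductive_set gen_semigroup :: "sim set \<Rightarrow> sim set" for G :: "sim set" where
  gen: "s \<in> G \<Longrightarrow> s \<in> gen_semigroup G"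
| comp: "s \<in> G \<Longrightarrow> f \<in> gen_semigroup G \<Longrightarrow> sim_comp s f \<in> gen_semigroup G"

definition assoc_family :: "sim set \<Rightarrow> sim set" where
  "assoc_family G = {sim_comp (sim_inv g) f | f g. f \<in> gen_semigroup G \<and> g \<in> gen_semigroup G}"

definition WSP :: "sim set \<Rightarrow> bool" where
  "WSP G \<longleftrightarrow> sim_id \<notin> closure (assoc_family G - {sim_id})"

end

theory Submission
  imports Defs
begin

lemma genA:
  assumes "(p, 0) \<in> G" "(r, a) \<in> G"
  shows "(p^m * r, p^m * a) \<in> gen_semigroup G"
proof (induction m)
  case 0
  then show ?case using assms by (simp add: gen_semigroup.gen)
next
  case (Suc m)
  have "sim_comp (p,0) (p^m * r, p^m * a) \<in> gen_semigroup G"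
    using Suc assms by (rule_tac gen_semigroup.comp) auto
  then show ?case by (simp add: sim_comp_def mult.assoc)
qed

lemma genB:
  assumes "(r, 1 - r) \<in> G" "(-r, 1 - a) \<in> G"
  shows "(- (r^(Suc n)), 1 - r^n * a) \<in> gen_semigroup G"
proof (induction n)
  case 0
  then show ?case using assms by (simp add: gen_semigroup.gen)
next
  case (Suc n)
  have "sim_comp (r, 1 - r) (- (r^(Suc n)), 1 - r^n * a) \<in> gen_semigroup G"
    using Suc assms by (rule_tac gen_semigroup.comp) auto
  then show ?case by (simp add: sim_comp_def algebra_simps)
qed

theorem lemma1:
  fixes p q r :: real
  assumes "p \<in> {0<..<1/36}" and "q \<in> {0<..<1/36}" and "r \<in> {0<..<1/36}"
    and "ln p / ln r \<notin> \<rat>"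
  shows "\<not> WSP {(p, 0), (r, 3/15), (-q, 8/15), (r, 8/15 - r), (-r, 1 - 3/15), (r, 1 - r)}"
proof -
  define G where "G = {(p, 0), (r, 3/15), (-q, 8/15), (r, 8/15 - r), (-r, 1 - 3/15), (r, 1 - r::real)}"
  define a :: real where "a = 3/15"
  define hh :: real where "hh = 8/15"
  have p0: "0 < p" "p < 1" and q0: "0 < q" "q < 1" and r0: "0 < r" "r < 1" using assms(1-3) by auto
  have lp: "ln p < 0" and lq: "ln q < 0" and lr: "ln r < 0" using p0 q0 r0 by auto
  define \<theta> where "\<theta> = ln p / ln r"
  define s where "s = ln q / ln r"
  have th0: "\<theta> > 0" and s0: "s > 0" using lp lq lr by (auto simp: \<theta>_def s_def divide_neg_neg)
  have thQ: "\<theta> \<notin> \<rat>" using assms(4) by (simp add: \<theta>_def)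
  define L where "L = - ln r"
  have L0: "L > 0" using lr by (simp add: L_def)
  define K where "K = 1 + a / r"
  have K0: "K > 0" using r0 by (simp add: K_def a_def add_pos_pos)
  have "sim_id \<in> closure (assoc_family G - {sim_id})"
    unfolding closure_approachable
  proof (intro allI impI)
    fix e :: real assume e0: "e > 0"
    define \<eta> where "\<eta> = e / (2 * L * K)"
    have eta0: "\<eta> > 0" using e0 L0 K0 by (simp add: \<eta>_def)
    obtain k :: nat where k0: "k > 0" and kf: "\<bar>frac (real k * \<theta>) - 0\<bar> < \<eta>"
      using Kronecker_approx_1_explicit[OF thQ _ _ eta0, of 0] by auto
    define f1 where "f1 = frac (real k * \<theta>)"
    have f1pos: "f1 > 0"
    proof -
      have "real k * \<theta> \<notin> \<int>"
      proof
        assume "real k * \<theta> \<in> \<int>"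
        then have "real k * \<theta> \<in> \<rat>" using Ints_subset_Rats by blast
        then have "(real k * \<theta>) / real k \<in> \<rat>" by (intro Rats_divide) auto
        then show False using thQ k0 by simp
      qed
      then show ?thesis unfolding f1_def using frac_ge_0[of "real k * \<theta>"] frac_eq_0_iff
        by (metis order_le_less)
    qed
    have f1eta: "f1 < \<eta>" using kf by (simp add: f1_def)
    define h1 where "h1 = nat (floor (real k * \<theta>))"
    have h1eq: "real k * \<theta> = real h1 + f1"
      using k0 th0 by (simp add: h1_def f1_def frac_def)
    define c :: nat where "c = nat (ceiling s) + 1"
    have cs: "real c > s" unfolding c_def using s0 by linarith
    have c1: "c \<ge> 1" by (simp add: c_def)
    define j :: nat where "j = nat (floor ((real c - s) / f1)) + 1"
    have jdef: "real j = of_int (floor ((real c - s) / f1)) + 1"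
      unfolding j_def using cs f1pos by simp
    have j1: "real j * f1 > real c - s"
    proof -
      have "(real c - s) / f1 < real j" using jdef by linarith
      then show ?thesis using f1pos by (simp add: divide_less_eq mult.commute)
    qed
    have j2: "real j * f1 \<le> real c - s + f1"
    proof -
      have "real j \<le> (real c - s) / f1 + 1" using jdef by linarith
      then have "real j * f1 \<le> ((real c - s) / f1 + 1) * f1" using f1pos by (simp add: mult_right_mono)
      then show ?thesis using f1pos by (simp add: distrib_right)
    qed
    define m where "m = j * k"
    define n where "n = j * h1 + c - 1"
    have nS: "real (Suc n) = real j * real h1 + real c" using c1 by (simp add: n_def)
    define \<delta> where "\<delta> = real m * \<theta> - real (Suc n) + s"
    have "real m * \<theta> = real j * (real k * \<theta>)" by (simp add: m_def)
    also have "\<dots> = real j * real h1 + real j * f1" using h1eq by (simp add: distrib_left)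
    finally have mth: "real m * \<theta> = real j * real h1 + real j * f1" .
    have deq: "\<delta> = real j * f1 - real c + s"
      unfolding \<delta>_def nS mth by simp
    have d0: "\<delta> > 0" and d1: "\<delta> < \<eta>" using deq j1 j2 f1eta by auto
    define cc where "cc = q * p ^ m"
    define dd where "dd = r ^ (Suc n)"
    define \<rho> where "\<rho> = cc / dd"
    have cc0: "cc > 0" and dd0: "dd > 0" using p0 q0 r0 by (auto simp: cc_def dd_def)
    have "ln \<rho> = ln q + real m * ln p - real (Suc n) * ln r"
      using p0 q0 r0 by (simp add: \<rho>_def cc_def dd_def ln_div ln_mult ln_realpow algebra_simps)
    also have "\<dots> = ln r * \<delta>"
    proof -
      have e1: "ln r * \<theta> = ln p" and e2: "ln r * s = ln q" using lr by (auto simp: \<theta>_def s_def)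
      have "ln r * \<delta> = real m * (ln r * \<theta>) - real (Suc n) * ln r + ln r * s"
        unfolding \<delta>_def by (simp only: distrib_left right_diff_distrib mult.left_commute mult.commute)
      then show ?thesis using e1 e2 by simp
    qed
    finally have lnrho: "ln \<rho> = - L * \<delta>" by (simp add: L_def)
    have rho0: "\<rho> > 0" using cc0 dd0 by (simp add: \<rho>_def)
    have rhoexp: "\<rho> = exp (- L * \<delta>)" using lnrho rho0 by (metis exp_ln)
    have rho1: "\<rho> < 1" using rhoexp L0 d0 by simp
    have rho2: "1 - \<rho> \<le> L * \<delta>" using rhoexp exp_ge_add_one_self[of "- L * \<delta>"] by simp
    define y where "y = (\<rho>, a * (\<rho> - 1) / r)"
    define F where "F = (- (cc * r), hh - cc * a)"
    define Gg where "Gg = (- (dd * r), hh - dd * a)"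
    have Gs: "(p, 0) \<in> G" "(r, a) \<in> G" "(-q, hh) \<in> G" "(r, hh - r) \<in> G" "(-r, 1 - a) \<in> G"
      "(r, 1 - r) \<in> G" by (auto simp: G_def a_def hh_def)
    have "sim_comp (-q, hh) (p^m * r, p^m * a) \<in> gen_semigroup G"
      using Gs genA[of p G r a m] by (intro gen_semigroup.comp) auto
    then have Fin: "F \<in> gen_semigroup G" by (simp add: sim_comp_def F_def cc_def algebra_simps)
    have "sim_comp (r, hh - r) (- (r^(Suc n)), 1 - r^n * a) \<in> gen_semigroup G"
      using Gs genB[of r G a n] by (intro gen_semigroup.comp) auto
    then have Gin: "Gg \<in> gen_semigroup G" by (simp add: sim_comp_def Gg_def dd_def algebra_simps)
    have "sim_comp (sim_inv Gg) F = y"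
      using dd0 r0 by (simp add: sim_comp_def sim_inv_def Gg_def F_def y_def \<rho>_def field_simps)
    then have yin: "y \<in> assoc_family G" using Fin Gin unfolding assoc_family_def by blast
    have yne: "y \<noteq> sim_id" using rho1 by (simp add: y_def sim_id_def)
    have "dist y sim_id = sqrt ((\<rho> - 1)^2 + (a * (\<rho> - 1) / r)^2)"
      by (simp add: y_def sim_id_def dist_Pair_Pair dist_real_def) (metis abs_divide abs_mult power2_abs)
    also have "\<dots> \<le> \<bar>\<rho> - 1\<bar> + \<bar>a * (\<rho> - 1) / r\<bar>" by (rule sqrt_sum_squares_le_sum_abs)
    also have "\<dots> = (1 - \<rho>) * K" using rho1 r0 by (simp add: K_def a_def abs_if field_simps)
    also have "\<dots> \<le> L * \<delta> * K" using rho2 K0 by (simp add: mult_right_mono)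
    also have "\<dots> < L * \<eta> * K" using d1 L0 K0 by simp
    also have "\<dots> < e" using e0 L0 K0 by (simp add: \<eta>_def)
    finally show "\<exists>y\<in>assoc_family G - {sim_id}. dist y sim_id < e" using yin yne by blast
  qed
  then show ?thesis unfolding WSP_def G_def by simp
qed

end
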